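(* Every indecomposable tournament with at least $5$ vertices having at most one non-critical vertex has an odd number of vertices.
   Context: A tournament $T=(V,A)$: finite vertex set, and for all distinct $x,y$ exactly one of $(x,y),(y,x)$ is an arc; write $x\to y$ for $(x,y)\in A$. $T-x=T[V\setminus\{x\}]$ is the induced subtournament. An interval of $T$ is $I\subseteq V$ such that for every $x\in V\setminus I$, either $x\to a$ for all $a\in I$ or $a\to x$ for all $a\in I$; trivial intervals are $\varnothing$, $V$, singletons; $T$ (with $\geqslant 3$ vertices) is indecomposable if all its intervals are trivial, decomposable otherwise. A vertex $x$ of an indecomposable tournament $T$ is critical if $T-x$ is decomposable, and non-critical otherwise. *)

theory Defs
  imports Main
begin

definition tournament :: "'a set \<Rightarrow> ('a \<times> 'a) set \<Rightarrow> bool" where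
  "tournament V A \<longleftrightarrow> finite V \<and> A \<subseteq> V \<times> V \<and>
     (\<forall>x\<in>V. (x, x) \<notin> A) \<and>
     (\<forall>x\<in>V. \<forall>y\<in>V. x \<noteq> y \<longrightarrow> ((x, y) \<in> A \<longleftrightarrow> (y, x) \<notin> A))"

definition induced_arcs :: "('a \<times> 'a) set \<Rightarrow> 'a set \<Rightarrow> ('a \<times> 'a) set" where
  "induced_arcs A W = A \<inter> (W \<times> W)"

definition is_interval :: "'a set \<Rightarrow> ('a \<times> 'a) set \<Rightarrow> 'a set \<Rightarrow> bool" where
  "is_interval V A I \<longleftrightarrow> I \<subseteq> V \<and>
     (\<forall>x\<in>V - I. (\<forall>a\<in>I. (x, a) \<in> A) \<or> (\<forall>a\<in>I. (a, x) \<in> A))"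

definition trivial_interval :: "'a set \<Rightarrow> 'a set \<Rightarrow> bool" where
  "trivial_interval V I \<longleftrightarrow> I = {} \<or> I = V \<or> (\<exists>v. I = {v})"

definition indecomposable :: "'a set \<Rightarrow> ('a \<times> 'a) set \<Rightarrow> bool" where
  "indecomposable V A \<longleftrightarrow> card V \<ge> 3 \<and>
     (\<forall>I. is_interval V A I \<longrightarrow> trivial_interval V I)"

definition decomposable :: "'a set \<Rightarrow> ('a \<times> 'a) set \<Rightarrow> bool" where
  "decomposable V A \<longleftrightarrow> card V \<ge> 3 \<and> \<not> indecomposable V A"

definition critical :: "'a set \<Rightarrow> ('a \<times> 'a) set \<Rightarrow> 'a \<Rightarrow> bool" where
  "critical V A x \<longleftrightarrow> x \<in> V \<and> decomposable (V - {x}) (induced_arcs A (V - {x}))"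

definition non_critical :: "'a set \<Rightarrow> ('a \<times> 'a) set \<Rightarrow> 'a \<Rightarrow> bool" where
  "non_critical V A x \<longleftrightarrow> x \<in> V \<and> \<not> decomposable (V - {x}) (induced_arcs A (V - {x}))"

end

theory Submission
  imports Defs
begin

definition unif :: "('a \<times> 'a) set \<Rightarrow> 'a \<Rightarrow> 'a set \<Rightarrow> bool" where
  "unif A v S \<longleftrightarrow> (\<forall>a\<in>S. (v, a) \<in> A) \<or> (\<forall>a\<in>S. (a, v) \<in> A)"

definition indc :: "('a \<times> 'a) set \<Rightarrow> 'a set \<Rightarrow> bool" where
  "indc A W \<longleftrightarrow> card W \<ge> 3 \<and>
     (\<forall>I. I \<subseteq> W \<longrightarrow> (\<forall>x\<in>W - I. unif A x I) \<longrightarrow> I = {} \<or> I = W \<or> (\<exists>v. I = {v}))"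

definition cp :: "('a \<times> 'a) set \<Rightarrow> 'a set \<Rightarrow> 'a \<Rightarrow> 'a \<Rightarrow> bool" where
  "cp A X t y \<longleftrightarrow> t \<in> X \<and> (\<forall>s\<in>X - {t}. unif A s {t, y})"

lemma is_interval_iff:
  "is_interval W (induced_arcs A W) I \<longleftrightarrow> I \<subseteq> W \<and> (\<forall>x\<in>W - I. unif A x I)"
  unfolding is_interval_def induced_arcs_def unif_def by blast

lemma indc_iff: "indecomposable W (induced_arcs A W) \<longleftrightarrow> indc A W"
  unfolding indecomposable_def indc_def is_interval_iff trivial_interval_def by blast

lemma unif_mono: "unif A v S \<Longrightarrow> T \<subseteq> S \<Longrightarrow> unif A v T"
  unfolding unif_def by blast

locale tour =
  fixes V :: "'a set" and A :: "('a \<times> 'a) set"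
  assumes tour: "tournament V A"
begin

lemma finV: "finite V" using tour unfolding tournament_def by blast

lemma inV: "(a, b) \<in> A \<Longrightarrow> a \<in> V \<and> b \<in> V" using tour unfolding tournament_def by blast

lemma asym: "(a, b) \<in> A \<Longrightarrow> (b, a) \<notin> A"
  using tour unfolding tournament_def by (metis inV)

lemma total: "a \<in> V \<Longrightarrow> b \<in> V \<Longrightarrow> a \<noteq> b \<Longrightarrow> (a, b) \<in> A \<or> (b, a) \<in> A"
  using tour unfolding tournament_def by blast

lemma unif_single: "a \<in> V \<Longrightarrow> b \<in> V \<Longrightarrow> a \<noteq> b \<Longrightarrow> unif A a {b}"
  using total unfolding unif_def by auto

lemma unif_trans: "unif A s {a, b} \<Longrightarrow> unif A s {b, c} \<Longrightarrow> unif A s {a, c}"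
  unfolding unif_def using asym by blast

lemma unif_combine:
  assumes "unif A v S" "a \<in> S" "\<forall>w\<in>U. unif A v (insert w S)"
  shows "unif A v (S \<union> U)"
proof (cases "(v, a) \<in> A")
  case True
  then have "\<forall>x\<in>S. (v, x) \<in> A" using assms(1,2) asym unfolding unif_def by blast
  moreover have "\<forall>w\<in>U. (v, w) \<in> A" using assms(2,3) True asym unfolding unif_def by blast
  ultimately show ?thesis unfolding unif_def by blast
next
  case False
  then have "\<forall>x\<in>S. (x, v) \<in> A" using assms(1,2) asym unfolding unif_def by blast
  moreover have "\<forall>w\<in>U. (w, v) \<in> A" using assms(2,3) False asym unfolding unif_def by blast
  ultimately show ?thesis unfolding unif_def by blast
qed

lemma indc_interval:
  assumes "indc A W" "I \<subseteq> W" "\<forall>x\<in>W - I. unif A x I"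
  shows "I = {} \<or> I = W \<or> (\<exists>v. I = {v})"
  using assms unfolding indc_def by blast

lemma indc_finite: "indc A W \<Longrightarrow> finite W"
  unfolding indc_def by (metis card.infinite not_numeral_le_zero)

lemma notBC:
  assumes X: "indc A X" and y: "y \<notin> X" and u: "unif A y X" and c: "cp A X t y"
  shows False
proof -
  have t: "t \<in> X" using c unfolding cp_def by blast
  have "unif A t (X - {t})"
  proof (cases "\<forall>a\<in>X. (y, a) \<in> A")
    case True
    have "\<forall>s\<in>X - {t}. (t, s) \<in> A"
    proof
      fix s assume s: "s \<in> X - {t}"
      then have "unif A s {t, y}" using c unfolding cp_def by blast
      moreover have "(y, s) \<in> A" using True s by blast
      ultimately show "(t, s) \<in> A" using asym unfolding unif_def by blast
    qed
    then show ?thesis unfolding unif_def by blast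
  next
    case False
    then have F: "\<forall>a\<in>X. (a, y) \<in> A" using u unfolding unif_def by blast
    have "\<forall>s\<in>X - {t}. (s, t) \<in> A"
    proof
      fix s assume s: "s \<in> X - {t}"
      then have "unif A s {t, y}" using c unfolding cp_def by blast
      moreover have "(s, y) \<in> A" using F s by blast
      ultimately show "(s, t) \<in> A" using asym unfolding unif_def by blast
    qed
    then show ?thesis unfolding unif_def by blast
  qed
  then have "\<forall>x\<in>X - (X - {t}). unif A x (X - {t})" using t by blast
  then have "X - {t} = {} \<or> X - {t} = X \<or> (\<exists>v. X - {t} = {v})"
    using indc_interval[OF X] by blast
  moreover have "card (X - {t}) \<ge> 2" using X t indc_finite[OF X] unfolding indc_def by auto
  ultimately show False using t by (elim disjE exE) auto
qed

lemma uniqC: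
  assumes X: "indc A X" and y: "y \<notin> X" and c1: "cp A X t y" and c2: "cp A X t' y"
  shows "t = t'"
proof (rule ccontr)
  assume ne: "t \<noteq> t'"
  have tt: "t \<in> X" "t' \<in> X" using c1 c2 unfolding cp_def by auto
  have "\<forall>s\<in>X - {t, t'}. unif A s {t, t'}"
  proof
    fix s assume s: "s \<in> X - {t, t'}"
    have "unif A s {t, y}" using s c1 unfolding cp_def by blast
    moreover have "unif A s {y, t'}" using s c2 unfolding cp_def by (simp add: insert_commute)
    ultimately show "unif A s {t, t'}" by (rule unif_trans)
  qed
  then have "{t, t'} = {} \<or> {t, t'} = X \<or> (\<exists>v. {t, t'} = {v})"
    using indc_interval[OF X] tt by (metis Diff_iff empty_subsetI insert_subset)
  moreover have "card X \<ge> 3" using X unfolding indc_def by blast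
  moreover have "card {t, t'} = 2" using ne by simp
  ultimately show False using ne by (elim disjE exE) auto
qed

end


lemma cpI:
  assumes "t \<in> X" "\<And>s. s \<in> X - {t} \<Longrightarrow> unif A s J" "t \<in> J" "y \<in> J"
  shows "cp A X t y"
proof -
  have "\<forall>s\<in>X - {t}. unif A s {t, y}"
  proof
    fix s assume "s \<in> X - {t}"
    then have "unif A s J" by (rule assms(2))
    then show "unif A s {t, y}" by (rule unif_mono) (simp add: assms(3,4))
  qed
  then show ?thesis unfolding cp_def using assms(1) by blast
qed

context tour
begin

lemma two_point:
  assumes X: "indc A X" "X \<subseteq> V" and y: "y \<in> V" "y \<notin> X" and z: "z \<in> V" "z \<notin> X"
    and yz: "y \<noteq> z"
    and nd: "\<not> indc A (X \<union> {y, z})"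
  shows "(\<forall>t\<in>X. unif A t {y, z}) \<or> (\<exists>t. cp A X t y \<and> unif A z {t, y})
    \<or> (\<exists>t. cp A X t z \<and> unif A y {t, z}) \<or> (\<exists>t. cp A X t y \<and> cp A X t z)
    \<or> (unif A y X \<and> unif A z X) \<or> unif A z (X \<union> {y}) \<or> unif A y (X \<union> {z})"
proof -
  let ?W = "X \<union> {y, z}"
  have fX: "finite X" using indc_finite[OF X(1)] .
  have "card X \<le> card ?W" using fX by (intro card_mono) auto
  then have c3: "card ?W \<ge> 3" using X(1) unfolding indc_def by linarith
  then obtain J where J: "J \<subseteq> ?W" "\<forall>x\<in>?W - J. unif A x J" "J \<noteq> {}" "J \<noteq> ?W" "\<forall>v. J \<noteq> {v}"
    using nd unfolding indc_def by blast
  have uJ: "\<And>x S. x \<in> ?W \<Longrightarrow> x \<notin> J \<Longrightarrow> S \<subseteq> J \<Longrightarrow> unif A x S"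
    using J(2) by (meson DiffI unif_mono)
  have "\<forall>x\<in>X - (J \<inter> X). unif A x (J \<inter> X)"
    using uJ by blast
  then have JX: "J \<inter> X = {} \<or> J \<inter> X = X \<or> (\<exists>t. J \<inter> X = {t})"
    using indc_interval[OF X(1)] by blast
  then show ?thesis
  proof (elim disjE exE)
    assume a: "J \<inter> X = {}"
    then have sub: "J \<subseteq> {y, z}" using J(1) by blast
    have "y \<in> J"
    proof (rule ccontr)
      assume "y \<notin> J" then have "J \<subseteq> {z}" using sub by blast
      then have "J = {z}" using J(3) by blast
      then show False using J(5) by blast
    qed
    moreover have "z \<in> J"
    proof (rule ccontr)
      assume "z \<notin> J" then have "J \<subseteq> {y}" using sub by blast
      then have "J = {y}" using J(3) by blast
      then show False using J(5) by blast
    qed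
    ultimately have "J = {y, z}" using sub by blast
    then have "\<forall>t\<in>X. unif A t {y, z}" using J(2) a y z by auto
    then show ?thesis by blast
  next
    fix t assume a: "J \<inter> X = {t}"
    then have t: "t \<in> X" "t \<in> J" by auto
    have out: "\<And>s. s \<in> X - {t} \<Longrightarrow> unif A s J" using J(2) a by blast
    show ?thesis
    proof (cases "y \<in> J")
      case yJ: True
      show ?thesis
      proof (cases "z \<in> J")
        case True
        have "cp A X t y" using cpI[OF t(1) out] t yJ by blast
        moreover have "cp A X t z" using cpI[OF t(1) out] t True by blast
        ultimately show ?thesis by blast
      next
        case False
        have "cp A X t y" using cpI[OF t(1) out] t yJ by blast
        moreover have "unif A z {t, y}" using uJ[of z] False z t yJ by simp
        ultimately show ?thesis by blast
      qed
    next
      case yJ: False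
      show ?thesis
      proof (cases "z \<in> J")
        case True
        have "cp A X t z" using cpI[OF t(1) out] t True by blast
        moreover have "unif A y {t, z}" using uJ[of y] yJ y t True by simp
        ultimately show ?thesis by blast
      next
        case False
        have "J = {t}" using J(1) a yJ False by blast
        then show ?thesis using J(5) by blast
      qed
    qed
  next
    assume a: "J \<inter> X = X"
    then have XJ: "X \<subseteq> J" by blast
    show ?thesis
    proof (cases "y \<in> J")
      case yJ: True
      show ?thesis
      proof (cases "z \<in> J")
        case True
        then have "J = ?W" using J(1) XJ yJ by blast
        then show ?thesis using J(4) by blast
      next
        case False
        have "unif A z (X \<union> {y})" using uJ[of z] False z XJ yJ by simp
        then show ?thesis by blast
      qed
    next
      case yJ: False
      show ?thesis
      proof (cases "z \<in> J")
        case True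
        have "unif A y (X \<union> {z})" using uJ[of y] yJ y XJ True by simp
        then show ?thesis by blast
      next
        case False
        have "unif A y X" "unif A z X" using uJ[of y] uJ[of z] yJ False y z XJ by simp_all
        then show ?thesis by blast
      qed
    qed
  qed
qed

lemma L1: "unif A x X \<Longrightarrow> \<forall>t\<in>X. unif A t {x, w} \<Longrightarrow> unif A w X"
  unfolding unif_def using asym by blast

lemma L2: "unif A x X \<Longrightarrow> t \<in> X \<Longrightarrow> unif A x {t, w} \<Longrightarrow> unif A x (insert w X)"
  unfolding unif_def using asym by blast

lemma L4:
  assumes "u \<in> V" "t \<in> V" "u \<noteq> t"
    and "unif A u {t, w}" "unif A t {u, z}" "unif A z {t, w}"
  shows "unif A w {u, z}"
proof (cases "(u, t) \<in> A")
  case True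
  then have "(t, u) \<notin> A" using asym by blast
  then have "(z, t) \<in> A" using assms(5) unfolding unif_def by blast
  then have "(t, z) \<notin> A" using asym by blast
  then have "(z, w) \<in> A" using assms(6) unfolding unif_def by blast
  moreover have "(u, w) \<in> A" using assms(4) True \<open>(t, u) \<notin> A\<close> unfolding unif_def by blast
  ultimately show ?thesis unfolding unif_def by blast
next
  case False
  then have tu: "(t, u) \<in> A" using total assms(1-3) by blast
  then have "(z, t) \<notin> A" using assms(5) asym unfolding unif_def by blast
  then have "(t, z) \<in> A" using assms(5) tu unfolding unif_def by blast
  then have "(w, z) \<in> A" using assms(6) asym unfolding unif_def by blast
  moreover have "(w, u) \<in> A" using assms(4) False tu unfolding unif_def by blast
  ultimately show ?thesis unfolding unif_def by blast
qed

lemma ER: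
  assumes VV: "indc A V" and X: "indc A X" "X \<subseteq> V" and c2: "card (V - X) \<ge> 2"
  shows "\<exists>y z. y \<in> V - X \<and> z \<in> V - X \<and> y \<noteq> z \<and> indc A (X \<union> {y, z})"
proof (rule ccontr)
  assume "\<not> ?thesis"
  then have H: "\<And>y z. y \<in> V - X \<Longrightarrow> z \<in> V - X \<Longrightarrow> y \<noteq> z \<Longrightarrow> \<not> indc A (X \<union> {y, z})"
    by blast
  define Y where "Y = V - X"
  have YV: "Y \<subseteq> V" unfolding Y_def by blast
  have fX: "finite X" using indc_finite[OF X(1)] .
  have c3: "card X \<ge> 3" using X(1) unfolding indc_def by blast
  then obtain a where a: "a \<in> X" by fastforce
  have TP: "(\<forall>t\<in>X. unif A t {y, z}) \<or> (\<exists>t. cp A X t y \<and> unif A z {t, y})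
    \<or> (\<exists>t. cp A X t z \<and> unif A y {t, z}) \<or> (\<exists>t. cp A X t y \<and> cp A X t z)
    \<or> (unif A y X \<and> unif A z X) \<or> unif A z (X \<union> {y}) \<or> unif A y (X \<union> {z})"
    if "y \<in> Y" "z \<in> Y" "y \<noteq> z" for y z
  proof -
    have q: "y \<in> V" "y \<notin> X" "z \<in> V" "z \<notin> X" using that unfolding Y_def by auto
    have nd: "\<not> indc A (X \<union> {y, z})" using H that unfolding Y_def by blast
    show ?thesis by (rule two_point[OF X(1) X(2) q that(3) nd])
  qed
  have notX: "\<And>y. y \<in> Y \<Longrightarrow> y \<notin> X" unfolding Y_def by blast
  have B: "\<forall>b\<in>Y. \<not> unif A b X"
  proof (rule ccontr)
    assume "\<not> (\<forall>b\<in>Y. \<not> unif A b X)"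
    then obtain b where b: "b \<in> Y" "unif A b X" by blast
    define Bs where "Bs = {b\<in>Y. unif A b X}"
    have XB: "X \<subseteq> V - Bs" using X(2) notX unfolding Bs_def by blast
    have "\<forall>x\<in>V - (V - Bs). unif A x (V - Bs)"
    proof
      fix x assume "x \<in> V - (V - Bs)"
      then have x: "x \<in> Y" "unif A x X" unfolding Bs_def by auto
      have "\<forall>w\<in>(V - Bs) - X. unif A x (insert w X)"
      proof
        fix w assume w: "w \<in> (V - Bs) - X"
        then have wY: "w \<in> Y" and wn: "\<not> unif A w X" unfolding Bs_def Y_def by auto
        have xw: "x \<noteq> w" using x wn by auto
        from TP[OF x(1) wY xw] show "unif A x (insert w X)"
        proof (elim disjE exE conjE)
          assume "\<forall>t\<in>X. unif A t {x, w}"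
          then have "unif A w X" using L1 x(2) by blast
          then show ?thesis using wn by blast
        next
          fix t assume "cp A X t x"
          then show ?thesis using notBC[OF X(1) notX[OF x(1)] x(2)] by blast
        next
          fix t assume "cp A X t w" "unif A x {t, w}"
          then show ?thesis using L2 x(2) unfolding cp_def by blast
        next
          fix t assume "cp A X t x"
          then show ?thesis using notBC[OF X(1) notX[OF x(1)] x(2)] by blast
        next
          assume "unif A w X" then show ?thesis using wn by blast
        next
          assume "unif A w (X \<union> {x})" then show ?thesis using wn unif_mono[of A w "X \<union> {x}" X] by blast
        next
          assume "unif A x (X \<union> {w})" then show ?thesis by simp
        qed
      qed
      then have "unif A x (X \<union> ((V - Bs) - X))" using unif_combine[OF x(2) a] by blast
      moreover have "X \<union> ((V - Bs) - X) = V - Bs" using XB by blast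
      ultimately show "unif A x (V - Bs)" by simp
    qed
    then have "V - Bs = {} \<or> V - Bs = V \<or> (\<exists>v. V - Bs = {v})"
      using indc_interval[OF VV] by blast
    moreover have "b \<in> Bs" "b \<in> V" using b YV unfolding Bs_def by auto
    moreover have "card (V - Bs) \<ge> 3"
      using c3 card_mono[OF _ XB] finV by (meson finite_Diff le_trans)
    ultimately show False by (elim disjE exE) auto
  qed
  have C: "\<forall>y\<in>Y. \<forall>u. \<not> cp A X u y"
  proof (rule ccontr)
    assume "\<not> (\<forall>y\<in>Y. \<forall>u. \<not> cp A X u y)"
    then obtain y u where y: "y \<in> Y" and cu: "cp A X u y" by blast
    have uX: "u \<in> X" using cu unfolding cp_def by blast
    define P where "P = insert u {z\<in>Y. cp A X u z}"
    have PV: "P \<subseteq> V" using uX X(2) YV unfolding P_def by blast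
    have "\<forall>w\<in>V - P. unif A w P"
    proof
      fix w assume w: "w \<in> V - P"
      have wu: "w \<noteq> u" "w \<in> V" "u \<in> V" using w uX X(2) unfolding P_def by auto
      have s: "unif A w {u}" by (rule unif_single) (use wu in auto)
      have "\<forall>z\<in>{z\<in>Y. cp A X u z}. unif A w (insert z {u})"
      proof
        fix z assume "z \<in> {z\<in>Y. cp A X u z}"
        then have z: "z \<in> Y" "cp A X u z" by auto
        show "unif A w (insert z {u})"
        proof (cases "w \<in> X")
          case True
          then have "unif A w {u, z}" using z(2) wu unfolding cp_def by blast
          then show ?thesis by (simp add: insert_commute)
        next
          case False
          then have wY: "w \<in> Y" and ncw: "\<not> cp A X u w"
            using w unfolding Y_def P_def by auto
          have zw: "z \<noteq> w" using z ncw by auto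
          have "unif A w {u, z}"
          using TP[OF z(1) wY zw]
          proof (elim disjE exE conjE)
            assume a1: "\<forall>t\<in>X. unif A t {z, w}"
            have "cp A X u w" unfolding cp_def
            proof (intro conjI ballI)
              show "u \<in> X" by (rule uX)
            next
              fix s assume s: "s \<in> X - {u}"
              have "unif A s {u, z}" using z(2) s unfolding cp_def by blast
              moreover have "unif A s {z, w}" using a1 s by blast
              ultimately show "unif A s {u, w}" by (rule unif_trans)
            qed
            then show ?thesis using ncw by blast
          next
            fix t assume "cp A X t z" "unif A w {t, z}"
            moreover have "t = u" using uniqC[OF X(1) notX[OF z(1)] \<open>cp A X t z\<close> z(2)] .
            ultimately show ?thesis by simp
          next
            fix t assume ct: "cp A X t w" and uz: "unif A z {t, w}"
            have tu: "t \<noteq> u" using ct ncw by blast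
            have tX: "t \<in> X" using ct unfolding cp_def by blast
            have "unif A u {t, w}" using ct uX tu unfolding cp_def by blast
            moreover have "unif A t {u, z}" using z(2) tX tu unfolding cp_def by blast
            moreover have "u \<in> V" "t \<in> V" "u \<noteq> t" using uX tX X(2) tu by auto
            ultimately show ?thesis using L4[OF _ _ _ _ _ uz] by blast
          next
            fix t assume "cp A X t z" "cp A X t w"
            moreover have "t = u" using uniqC[OF X(1) notX[OF z(1)] \<open>cp A X t z\<close> z(2)] .
            ultimately show ?thesis using ncw by blast
          next
            assume "unif A z X" then show ?thesis using B z(1) by blast
          next
            assume "unif A w (X \<union> {z})" then show ?thesis using B wY unif_mono[of A w "X \<union> {z}" X] by blast
          next
            assume "unif A z (X \<union> {w})" then show ?thesis using B z(1) unif_mono[of A z "X \<union> {w}" X] by blast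
          qed
          then show ?thesis by (simp add: insert_commute)
        qed
      qed
      then have "unif A w ({u} \<union> {z\<in>Y. cp A X u z})" using unif_combine[OF s] by blast
      then show "unif A w P" unfolding P_def by simp
    qed
    then have "P = {} \<or> P = V \<or> (\<exists>v. P = {v})"
      using indc_interval[OF VV PV] by blast
    moreover have "u \<in> P" "y \<in> P" "u \<noteq> y" using y cu notX[OF y] uX unfolding P_def by auto
    moreover have "X - {u} \<noteq> {}"
    proof
      assume "X - {u} = {}"
      then have "X \<subseteq> {u}" by blast
      then have "card X \<le> card {u}" by (rule card_mono[rotated]) simp
      then show False using c3 by simp
    qed
    then obtain s where "s \<in> X" "s \<noteq> u" by blast
    moreover have "s \<notin> P" using \<open>s \<in> X\<close> \<open>s \<noteq> u\<close> notX unfolding P_def by blast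
    ultimately show False using X(2) by (elim disjE exE) auto
  qed
  have Yne: "Y \<noteq> {}" using c2 unfolding Y_def by (metis card.empty not_numeral_le_zero)
  then obtain y0 where y0: "y0 \<in> Y" by blast
  have "\<forall>t\<in>V - Y. unif A t Y"
  proof
    fix t assume "t \<in> V - Y"
    then have tX: "t \<in> X" unfolding Y_def by blast
    have s: "unif A t {y0}" by (rule unif_single) (use tX y0 X(2) YV notX in auto)
    have "\<forall>z\<in>Y. unif A t (insert z {y0})"
    proof
      fix z assume z: "z \<in> Y"
      show "unif A t (insert z {y0})"
      proof (cases "z = y0")
        case True then show ?thesis using s by simp
      next
        case False
        have "unif A t {y0, z}"
        using TP[OF y0 z False[symmetric]]
        proof (elim disjE exE conjE)
          assume "\<forall>t\<in>X. unif A t {y0, z}" then show ?thesis using tX by blast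
        next
          fix t' assume "cp A X t' y0" then show ?thesis using C y0 by blast
        next
          fix t' assume "cp A X t' z" then show ?thesis using C z by blast
        next
          fix t' assume "cp A X t' y0" then show ?thesis using C y0 by blast
        next
          assume "unif A y0 X" then show ?thesis using B y0 by blast
        next
          assume "unif A z (X \<union> {y0})" then show ?thesis using B z unif_mono[of A z "X \<union> {y0}" X] by blast
        next
          assume "unif A y0 (X \<union> {z})" then show ?thesis using B y0 unif_mono[of A y0 "X \<union> {z}" X] by blast
        qed
        then show ?thesis by (simp add: insert_commute)
      qed
    qed
    then have "unif A t ({y0} \<union> Y)" using unif_combine[OF s] by blast
    then show "unif A t Y" using y0 by (simp add: insert_absorb)
  qed
  then have "Y = {} \<or> Y = V \<or> (\<exists>v. Y = {v})"
    using indc_interval[OF VV YV] by blast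
  then show False using Yne c2 a X(2) unfolding Y_def by (elim disjE exE) auto
qed

lemma cyc_indc:
  assumes wo: "(w, p) \<in> A" and oi: "(p, i) \<in> A" and iw: "(i, w) \<in> A"
  shows "indc A {w, p, i}"
proof -
  have d: "w \<noteq> p" "p \<noteq> i" "i \<noteq> w" using asym wo oi iw by blast+
  have ow: "(p, w) \<notin> A" and io: "(i, p) \<notin> A" and wi: "(w, i) \<notin> A" using asym wo oi iw by blast+
  have "card {w, p, i} = 3" using d by auto
  moreover have "I = {} \<or> I = {w, p, i} \<or> (\<exists>v. I = {v})"
    if sub: "I \<subseteq> {w, p, i}" and H: "\<forall>x\<in>{w, p, i} - I. unif A x I" for I
  proof (cases "w \<in> I")
    case wI: True
    show ?thesis
    proof (cases "p \<in> I")
      case oI: True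
      show ?thesis
      proof (cases "i \<in> I")
        case True then show ?thesis using sub wI oI by blast
      next
        case False
        then have "unif A i I" using H by blast
        then show ?thesis using wI oI iw oi io wi unfolding unif_def by blast
      qed
    next
      case oN: False
      show ?thesis
      proof (cases "i \<in> I")
        case True
        have "unif A p I" using H oN by blast
        then show ?thesis using wI True wo oi ow io unfolding unif_def by blast
      next
        case False then show ?thesis using sub wI oN by blast
      qed
    qed
  next
    case wN: False
    show ?thesis
    proof (cases "p \<in> I")
      case oI: True
      show ?thesis
      proof (cases "i \<in> I")
        case True
        have "unif A w I" using H wN by blast
        then show ?thesis using oI True wo iw ow wi unfolding unif_def by blast
      next
        case False then show ?thesis using sub wN oI by blast
      qed
    next
      case oN: False
      then show ?thesis using sub wN by blast
    qed
  qed
  ultimately show ?thesis unfolding indc_def by simp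
qed

lemma cyc_exists:
  assumes VV: "indc A V" and w: "w \<in> V"
  shows "\<exists>p i. (w, p) \<in> A \<and> (p, i) \<in> A \<and> (i, w) \<in> A"
proof -
  have c3: "card V \<ge> 3" using VV unfolding indc_def by blast
  have c2: "card (V - {w}) \<ge> 2" using c3 w finV by simp
  define Os where "Os = {p\<in>V. (w, p) \<in> A}"
  define I where "I = {i\<in>V. (i, w) \<in> A}"
  have nontriv: "\<And>S. S \<subseteq> V \<Longrightarrow> \<forall>x\<in>V - S. unif A x S \<Longrightarrow> S = {} \<or> S = V \<or> (\<exists>v. S = {v})"
    using indc_interval[OF VV] by blast
  have Pn: "Os \<noteq> {}"
  proof
    assume "Os = {}"
    then have "\<forall>a\<in>V - {w}. (a, w) \<in> A" using total w unfolding Os_def by blast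
    then have "\<forall>x\<in>V - (V - {w}). unif A x (V - {w})" using w unfolding unif_def by blast
    then have "V - {w} = {} \<or> V - {w} = V \<or> (\<exists>v. V - {w} = {v})" using nontriv by blast
    then show False
    proof (elim disjE exE)
      assume "V - {w} = {}" then show False using c2 by (metis card.empty not_numeral_le_zero)
    next
      assume "V - {w} = V" then show False using w by blast
    next
      fix v assume "V - {w} = {v}" then show False using c2 by simp
    qed
  qed
  have In: "I \<noteq> {}"
  proof
    assume "I = {}"
    then have "\<forall>a\<in>V - {w}. (w, a) \<in> A" using total w unfolding I_def by blast
    then have "\<forall>x\<in>V - (V - {w}). unif A x (V - {w})" using w unfolding unif_def by blast
    then have "V - {w} = {} \<or> V - {w} = V \<or> (\<exists>v. V - {w} = {v})" using nontriv by blast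
    then show False
    proof (elim disjE exE)
      assume "V - {w} = {}" then show False using c2 by (metis card.empty not_numeral_le_zero)
    next
      assume "V - {w} = V" then show False using w by blast
    next
      fix v assume "V - {w} = {v}" then show False using c2 by simp
    qed
  qed
  show ?thesis
  proof (rule ccontr)
    assume nc: "\<not> ?thesis"
    have "\<forall>x\<in>V - (V - Os). unif A x (V - Os)"
    proof
      fix x assume "x \<in> V - (V - Os)"
      then have x: "x \<in> V" "(w, x) \<in> A" unfolding Os_def by auto
      have "\<forall>a\<in>V - Os. (a, x) \<in> A"
      proof
        fix a assume a: "a \<in> V - Os"
        show "(a, x) \<in> A"
        proof (cases "a = w")
          case True then show ?thesis using x by simp
        next
          case False
          then have "(a, w) \<in> A" using a total w unfolding Os_def by blast
          then have "(x, a) \<notin> A" using nc x by blast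
          moreover have "a \<noteq> x" using a x unfolding Os_def by blast
          ultimately show ?thesis using total a x by blast
        qed
      qed
      then show "unif A x (V - Os)" unfolding unif_def by blast
    qed
    then have D: "V - Os = {} \<or> V - Os = V \<or> (\<exists>v. V - Os = {v})" using nontriv by blast
    obtain i where iI: "i \<in> I" using In by blast
    have wO: "w \<in> V - Os" using w asym unfolding Os_def by blast
    have iO: "i \<in> V - Os" "i \<noteq> w" using iI asym unfolding I_def Os_def by blast+
    obtain p where pO: "p \<in> Os" using Pn by blast
    have pV: "p \<in> V" using pO unfolding Os_def by blast
    from D show False
    proof (elim disjE exE)
      assume "V - Os = {}" then show False using wO by blast
    next
      assume "V - Os = V" then show False using pO pV by blast
    next
      fix v assume "V - Os = {v}" then show False using wO iO by auto
    qed
  qed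
qed

lemma odd_ext:
  assumes VV: "indc A V" and w: "w \<in> V" and ev: "even (card V)"
  shows "\<exists>v\<in>V. v \<noteq> w \<and> indc A (V - {v})"
proof -
  define S where "S = {X. X \<subseteq> V \<and> w \<in> X \<and> indc A X \<and> odd (card X)}"
  obtain p i where c: "(w, p) \<in> A" "(p, i) \<in> A" "(i, w) \<in> A" using cyc_exists[OF VV w] by blast
  have ci: "indc A {w, p, i}" by (rule cyc_indc[OF c])
  then have "card {w, p, i} \<ge> 3" unfolding indc_def by blast
  moreover have "card {w, p, i} \<le> 3" by (rule card_insert_le_m1) (simp_all add: card_insert_le_m1)
  ultimately have c3: "card {w, p, i} = 3" by linarith
  have "{w, p, i} \<subseteq> V" using c inV by blast
  then have "{w, p, i} \<in> S" unfolding S_def using ci c3 by simp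
  then have Sne: "S \<noteq> {}" by blast
  have "S \<subseteq> Pow V" unfolding S_def by blast
  then have Sfin: "finite S" using finV by (simp add: finite_subset)
  define m where "m = Max (card ` S)"
  have "m \<in> card ` S" unfolding m_def using Sne Sfin by simp
  then obtain X where XS: "X \<in> S" and cX: "card X = m" by blast
  have maxX: "card X' \<le> card X" if "X' \<in> S" for X'
    using Max_ge[OF finite_imageI[OF Sfin] imageI[OF that]] cX unfolding m_def by simp
  have X: "X \<subseteq> V" "w \<in> X" "indc A X" "odd (card X)" using XS unfolding S_def by auto
  have fX: "finite X" using X(1) finV finite_subset by blast
  have cd: "card (V - X) = card V - card X" using X(1) fX by (simp add: card_Diff_subset)
  have le: "card X \<le> card V" using X(1) finV by (simp add: card_mono)
  have ne: "card X \<noteq> card V" using X(4) ev by auto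
  have "card (V - X) = 1"
  proof (rule ccontr)
    assume "card (V - X) \<noteq> 1"
    moreover have "card (V - X) \<noteq> 0" using cd le ne by simp
    ultimately have "card (V - X) \<ge> 2" by simp
    from ER[OF VV X(3) X(1) this] obtain y z where yz: "y \<in> V - X" "z \<in> V - X" "y \<noteq> z"
      "indc A (X \<union> {y, z})" by blast
    have eq: "X \<union> {y, z} = insert y (insert z X)" by blast
    have cu: "card (X \<union> {y, z}) = card X + 2" unfolding eq using yz fX by simp
    have "X \<union> {y, z} \<subseteq> V" using yz X(1) by blast
    then have "X \<union> {y, z} \<in> S" unfolding S_def using yz(4) X(2,4) cu by simp
    then have "card (X \<union> {y, z}) \<le> card X" by (rule maxX)
    then show False using cu by simp
  qed
  then obtain v where v: "V - X = {v}" by (auto simp: card_Suc_eq)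
  then have "X = V - {v}" using X(1) by blast
  moreover have "v \<in> V" "v \<noteq> w" using v X(2) by auto
  ultimately show ?thesis using X(3) by blast
qed

end

theorem mainTheorem9:
  fixes V :: "'a set" and A :: "('a \<times> 'a) set"
  assumes "tournament V A"
    and "indecomposable V A"
    and "card V \<ge> 5"
    and "card {x \<in> V. non_critical V A x} \<le> 1"
  shows "odd (card V)"
proof (rule ccontr)
  assume ev0: "\<not> odd (card V)"
  then have ev: "even (card V)" by simp
  interpret tour V A by (rule tour.intro) (rule assms(1))
  have "induced_arcs A V = A" using assms(1) unfolding tournament_def induced_arcs_def by blast
  then have VV: "indc A V" using assms(2) indc_iff[of V A] by simp
  have nc: "non_critical V A v" if "v \<in> V" "indc A (V - {v})" for v
    using that indc_iff[of "V - {v}" A] unfolding non_critical_def decomposable_def by simp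
  have "V \<noteq> {}" using assms(3) by auto
  then obtain w0 where "w0 \<in> V" by blast
  obtain v1 where v1: "v1 \<in> V" "v1 \<noteq> w0" "indc A (V - {v1})" using odd_ext[OF VV \<open>w0 \<in> V\<close> ev] by blast
  obtain v2 where v2: "v2 \<in> V" "v2 \<noteq> v1" "indc A (V - {v2})" using odd_ext[OF VV v1(1) ev] by blast
  have "{v1, v2} \<subseteq> {x \<in> V. non_critical V A x}" using nc v1 v2 by blast
  then have "card {v1, v2} \<le> card {x \<in> V. non_critical V A x}"
    by (rule card_mono[rotated]) (use finV in simp)
  then show False using v2(2) assms(4) by simp
qed

end
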